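(* Let $n$ be even and let $F\colon \mathbb F_2^n\to\mathbb F_2^n$ be a quadratic APN function. For $b\in\mathbb F_2^n\setminus\{0\}$ let $V_b=T_b\cup\overline{T_b}$ as defined in the context. Then the collection $\{V_b\colon b\in\mathbb F_2^n\setminus\{0\}\}$ is a vector space partition of $\mathbb F_2^n$, i.e. each $V_b$ is a subspace, $V_{b_1}\cap V_{b_2}=\{0\}$ for $b_1\neq b_2$, and every nonzero vector of $\mathbb F_2^n$ lies in some $V_b$.
   Context: $\langle\cdot,\cdot\rangle$ is the standard dot product on $\mathbb F_2^n$. A function $F\colon\mathbb F_2^n\to\mathbb F_2^n$ is APN if for every $a\neq 0$ and every $c$, the equation $F(x)+F(x+a)=c$ has at most $2$ solutions $x$. $F$ is quadratic if every component function $x\mapsto\langle b,F(x)\rangle$ is the sum of a quadratic form and an affine function over $\mathbb F_2$. Put $D_{F,a}(x)=F(x)+F(x+a)$, $H_b=\{x\colon\langle b,x\rangle=0\}$, $\overline{H_b}=\{x\colon\langle b,x\rangle=1\}$, $T_b=\{a\in\mathbb F_2^n\colon \mathrm{Im}(D_{F,a})=H_b\}\cup\{0\}$, $\overline{T_b}=\{a\in\mathbb F_2^n\colon \mathrm{Im}(D_{F,a})=\overline{H_b}\}$, and $V_b=T_b\cup\overline{T_b}$. (For a quadratic APN function and $a\ne 0$, $\mathrm{Im}(D_{F,a})$ is an affine hyperplane; $V_b$ is a linear subspace.) *)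

theory Defs
  imports "HOL-Analysis.Analysis" "HOL-Library.Z2"
begin

text \<open>F_2^n is modelled as bit ^ 'n, with n = CARD('n).\<close>

definition dotp :: "bit ^ 'n \<Rightarrow> bit ^ 'n \<Rightarrow> bit" where
  "dotp x y = (\<Sum>i\<in>UNIV. x $ i * y $ i)"

definition is_APN :: "(bit ^ 'n \<Rightarrow> bit ^ 'n) \<Rightarrow> bool" where
  "is_APN F \<longleftrightarrow> (\<forall>a c. a \<noteq> 0 \<longrightarrow> card {x. F x + F (x + a) = c} \<le> 2)"

definition is_quadratic :: "(bit ^ 'n \<Rightarrow> bit ^ 'n) \<Rightarrow> bool" where
  "is_quadratic F \<longleftrightarrow> (\<forall>b. \<exists>(q :: 'n \<Rightarrow> 'n \<Rightarrow> bit) (l :: 'n \<Rightarrow> bit) (e :: bit).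
      \<forall>x. dotp b (F x) = (\<Sum>i\<in>UNIV. \<Sum>j\<in>UNIV. q i j * x $ i * x $ j)
                          + (\<Sum>i\<in>UNIV. l i * x $ i) + e)"

definition DF :: "(bit ^ 'n \<Rightarrow> bit ^ 'n) \<Rightarrow> bit ^ 'n \<Rightarrow> bit ^ 'n \<Rightarrow> bit ^ 'n" where
  "DF F a x = F x + F (x + a)"

definition H :: "bit ^ 'n \<Rightarrow> (bit ^ 'n) set" where
  "H b = {x. dotp b x = 0}"

definition Hbar :: "bit ^ 'n \<Rightarrow> (bit ^ 'n) set" where
  "Hbar b = {x. dotp b x = 1}"

definition T :: "(bit ^ 'n \<Rightarrow> bit ^ 'n) \<Rightarrow> bit ^ 'n \<Rightarrow> (bit ^ 'n) set" where
  "T F b = {a. range (DF F a) = H b} \<union> {0}"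

definition Tbar :: "(bit ^ 'n \<Rightarrow> bit ^ 'n) \<Rightarrow> bit ^ 'n \<Rightarrow> (bit ^ 'n) set" where
  "Tbar F b = {a. range (DF F a) = Hbar b}"

definition V :: "(bit ^ 'n \<Rightarrow> bit ^ 'n) \<Rightarrow> bit ^ 'n \<Rightarrow> (bit ^ 'n) set" where
  "V F b = T F b \<union> Tbar F b"

text \<open>Linear subspace over F_2: contains 0 and closed under addition
  (scalar multiplication by 0 or 1 is then automatic).\<close>
definition f2_subspace :: "(bit ^ 'n) set \<Rightarrow> bool" where
  "f2_subspace S \<longleftrightarrow> 0 \<in> S \<and> (\<forall>x\<in>S. \<forall>y\<in>S. x + y \<in> S)"

end

theory Submission
  imports Defs
begin

instance bit :: finite
proof
  have "(UNIV :: bit set) = {0, 1}" by (auto intro: bit.exhaust)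
  then show "finite (UNIV :: bit set)" by (metis finite.emptyI finite.insertI)
qed

declare add_bit_eq_xor[simp del] mult_bit_eq_and[simp del]

lemma vadd_self [simp]: "(v :: bit ^ 'n) + v = 0"
  by (simp add: vec_eq_iff)

lemma vadd_cancel [simp]: "(v :: bit ^ 'n) + (v + w) = w"
  by (metis add.assoc add_0 vadd_self)

lemma dotp_add: "dotp b (x + y) = dotp b x + dotp b y"
  unfolding dotp_def by (simp only: vector_add_component distrib_left sum.distrib)

lemma dotp_axis: "dotp b (axis i 1) = b $ i"
  unfolding dotp_def axis_def by (simp add: if_distrib cong: if_cong)

lemma dotp_zero: "dotp b 0 = 0"
  unfolding dotp_def by simp

lemma bit_third: "((p::bit)+q) * (r+s) + (p+q+t) * (r+s+w) + p * r + (p+t) * (r+w) + q * s + (q+t) * (s+w) + t * w + 0 * 0 = 0"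
  by (cases p; cases q; cases r; cases s; cases t; cases w) simp_all

lemma bit_quad_term: "(c::bit) * (p+q) * (r+s) + c * (p+q+t) * (r+s+w) + c * p * r + c * (p+t) * (r+w) + c * q * s + c * (q+t) * (s+w) + c * t * w + c * 0 * 0 = 0"
  by (cases c; cases p; cases q; cases r; cases s; cases t; cases w) simp_all

lemma bit_lin_term: "(c::bit) * (p+q) + c * (p+q+t) + c * p + c * (p+t) + c * q + c * (q+t) + c * t + c * 0 = 0"
  by (cases c; cases p; cases q; cases t) simp_all

lemma bit_8: "(e::bit) + e + e + e + e + e + e + e = 0"
  by (cases e) simp_all

lemma quad_third:
  fixes q :: "'n::finite \<Rightarrow> 'n \<Rightarrow> bit" and l :: "'n \<Rightarrow> bit" and e :: bit
  assumes g: "\<And>z. g z = (\<Sum>i\<in>UNIV. \<Sum>j\<in>UNIV. q i j * z $ i * z $ j) + (\<Sum>i\<in>UNIV. l i * z $ i) + e"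
  shows "g (x+y) + g (x+y+a) + g x + g (x+a) + g y + g (y+a) + g a + g 0 = 0"
proof -
  define Q where "Q z = (\<Sum>i\<in>UNIV. \<Sum>j\<in>UNIV. q i j * z $ i * z $ j)" for z :: "bit ^ 'n"
  define M where "M z = (\<Sum>i\<in>UNIV. l i * z $ i)" for z :: "bit ^ 'n"
  have gg: "g z = Q z + M z + e" for z using g Q_def M_def by simp
  have Q0: "Q (x+y) + Q (x+y+a) + Q x + Q (x+a) + Q y + Q (y+a) + Q a + Q 0 = 0"
    unfolding Q_def by (simp only: sum.distrib[symmetric] vector_add_component zero_index bit_quad_term sum.neutral_const)
  have M0: "M (x+y) + M (x+y+a) + M x + M (x+a) + M y + M (y+a) + M a + M 0 = 0"
    unfolding M_def by (simp only: sum.distrib[symmetric] vector_add_component zero_index bit_lin_term sum.neutral_const)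
  have "g (x+y) + g (x+y+a) + g x + g (x+a) + g y + g (y+a) + g a + g 0
     = (Q (x+y) + Q (x+y+a) + Q x + Q (x+a) + Q y + Q (y+a) + Q a + Q 0)
     + (M (x+y) + M (x+y+a) + M x + M (x+a) + M y + M (y+a) + M a + M 0)
     + (e + e + e + e + e + e + e + e)"
    unfolding gg by (simp only: add_ac)
  also have "\<dots> = 0" using Q0 M0 bit_8 by simp
  finally show ?thesis .
qed

lemma bit_add_self [simp]: "(u::bit) + u = 0"
  by (cases u) simp_all

lemma bit_add_eq0: "((u::bit) + v = 0) = (u = v)"
  by (cases u; cases v) simp_all

lemma vadd_eq0: "((u::bit^'n) + v = 0) = (u = v)"
  by (metis vadd_cancel add_0_right vadd_self)

lemma dotp_axis': "dotp (axis i 1) v = v $ i"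
proof -
  have "dotp (axis i 1) v = (\<Sum>ia\<in>UNIV. if ia = i then v$ia else 0)"
    unfolding dotp_def axis_def by (intro sum.cong) auto
  then show ?thesis by simp
qed

lemma bit8: "(A1::bit) + A2 + A3 + A4 + A5 + A6 + A7 + A8 = 0 \<Longrightarrow>
   A1 + A2 + A8 + A7 = (A3 + A4 + A8 + A7) + (A5 + A6 + A8 + A7)"
proof -
  assume h: "A1 + A2 + A3 + A4 + A5 + A6 + A7 + A8 = 0"
  have "(A3 + A4 + A8 + A7) + (A5 + A6 + A8 + A7) = (A3 + A4 + A5 + A6) + ((A8 + A8) + (A7 + A7))"
    by (simp only: add_ac)
  also have "\<dots> = A3 + A4 + A5 + A6" by (simp only: bit_add_self add_0_right)
  also have "(A1 + A2 + A8 + A7) + (A3 + A4 + A5 + A6) = 0"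
    using h by (simp only: add_ac)
  hence "A1 + A2 + A8 + A7 = A3 + A4 + A5 + A6" by (simp only: bit_add_eq0)
  finally show ?thesis by simp
qed

definition Lf :: "(bit ^ 'n \<Rightarrow> bit ^ 'n) \<Rightarrow> bit ^ 'n \<Rightarrow> bit ^ 'n \<Rightarrow> bit ^ 'n" where
  "Lf F a x = F x + F (x + a) + F 0 + F a"

lemma L_add:
  assumes "is_quadratic F"
  shows "Lf F a (x + y) = Lf F a x + Lf F a y"
proof (subst vec_eq_iff, intro allI)
  fix i
  obtain q l e where qle: "\<forall>z. dotp (axis i 1) (F z) = (\<Sum>i\<in>UNIV. \<Sum>j\<in>UNIV. q i j * z $ i * z $ j)
                          + (\<Sum>i\<in>UNIV. l i * z $ i) + e"
    using assms unfolding is_quadratic_def by blast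
  define g where "g z = F z $ i" for z
  have "g (x+y) + g (x+y+a) + g x + g (x+a) + g y + g (y+a) + g a + g 0 = 0"
    by (rule quad_third[where q=q and l=l and e=e]) (use qle in \<open>simp add: g_def dotp_axis'\<close>)
  from bit8[OF this] show "Lf F a (x + y) $ i = (Lf F a x + Lf F a y) $ i"
    unfolding Lf_def g_def by (simp only: vector_add_component)
qed

lemma L_sym: "Lf F a x = Lf F x a"
  unfolding Lf_def by (simp add: add_ac)

lemma L_self: "Lf F a a = 0" and L_zero: "Lf F a 0 = 0"
  unfolding Lf_def by (simp_all add: add_ac)

lemma L_ker:
  assumes "is_APN F" "a \<noteq> 0" "Lf F a x = 0"
  shows "x = 0 \<or> x = a"
proof (rule ccontr)
  assume nx: "\<not> (x = 0 \<or> x = a)"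
  define S where "S = {z. F z + F (z + a) = F 0 + F a}"
  have "(F x + F (x + a)) + (F 0 + F a) = 0" using assms(3) unfolding Lf_def by (simp only: add.assoc)
  then have "x \<in> S" unfolding S_def by (simp only: vadd_eq0 mem_Collect_eq)
  moreover have "0 \<in> S" "a \<in> S" unfolding S_def by (simp_all add: add.commute)
  ultimately have sub: "{0, a, x} \<subseteq> S" by blast
  have "card {0, a, x} = 3" using nx assms(2) by auto
  moreover have "card S \<le> 2" using assms(1) assms(2) unfolding is_APN_def S_def
    by blast
  ultimately show False using card_mono[OF _ sub] by simp
qed

lemma L_fiber:
  assumes "is_APN F" "is_quadratic F" "a \<noteq> 0"
  shows "{y. Lf F a y = Lf F a x} = {x, x + a}"
proof
  show "{y. Lf F a y = Lf F a x} \<subseteq> {x, x + a}"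
  proof
    fix y assume "y \<in> {y. Lf F a y = Lf F a x}"
    then have "Lf F a y + Lf F a x = 0" by simp
    then have h0: "Lf F a (y + x) = 0" by (simp add: L_add[OF assms(2)])
    have yy: "y = (y + x) + x" by (simp add: add.assoc)
    from L_ker[OF assms(1,3) h0] show "y \<in> {x, x + a}"
    proof
      assume "y + x = 0" then show ?thesis by (simp add: vadd_eq0)
    next
      assume "y + x = a" then show ?thesis using yy by (simp add: add.commute)
    qed
  qed
next
  have "Lf F a (x + a) = Lf F a x"
    by (simp add: L_add[OF assms(2)] L_self)
  then show "{x, x + a} \<subseteq> {y. Lf F a y = Lf F a x}" by simp
qed

lemma L_card:
  fixes F :: "bit ^ 'n \<Rightarrow> bit ^ 'n"
  assumes "is_APN F" "is_quadratic F" "a \<noteq> 0"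
  shows "card (UNIV :: (bit ^ 'n) set) = 2 * card (range (Lf F a))"
proof -
  let ?W = "range (Lf F a)"
  have U: "(UNIV :: (bit ^ 'n) set) = (\<Union>w\<in>?W. {y. Lf F a y = w})"
  proof (rule set_eqI)
    fix y :: "bit ^ 'n"
    have "y \<in> {z. Lf F a z = Lf F a y}" by simp
    then show "y \<in> UNIV \<longleftrightarrow> y \<in> (\<Union>w\<in>?W. {y. Lf F a y = w})"
      using rangeI[of "Lf F a" y] by (simp only: UN_iff iffI UNIV_I) blast
  qed
  have "card (UNIV :: (bit ^ 'n) set) = card (\<Union>w\<in>?W. {y. Lf F a y = w})"
    using U by (rule arg_cong)
  also have "card (\<Union>w\<in>?W. {y. Lf F a y = w}) = (\<Sum>w\<in>?W. card {y. Lf F a y = w})"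
    by (rule card_UN_disjoint) auto
  also have "\<dots> = (\<Sum>w\<in>?W. 2)"
  proof (rule sum.cong)
    fix w assume "w \<in> ?W"
    then obtain x where w: "w = Lf F a x" by blast
    have ne: "x \<noteq> x + a"
    proof
      assume "x = x + a"
      then have "x + x = x + (x + a)" by (rule arg_cong)
      then show False using assms(3) by simp
    qed
    show "card {y. Lf F a y = w} = 2"
      unfolding w L_fiber[OF assms] using ne by simp
  qed simp
  also have "\<dots> = 2 * card ?W" by simp
  finally show ?thesis .
qed


lemma W_add:
  assumes "is_quadratic F"
  shows "u \<in> range (Lf F a) \<Longrightarrow> v \<in> range (Lf F a) \<Longrightarrow> u + v \<in> range (Lf F a)"
proof -
  assume "u \<in> range (Lf F a)" "v \<in> range (Lf F a)"
  then obtain x y where "u = Lf F a x" "v = Lf F a y" by blast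
  then have "u + v = Lf F a (x + y)" by (simp add: L_add[OF assms])
  then show ?thesis by simp
qed

lemma W_index2:
  fixes F :: "bit ^ 'n \<Rightarrow> bit ^ 'n"
  assumes "is_APN F" "is_quadratic F" "a \<noteq> 0"
    and "x \<notin> range (Lf F a)" "y \<notin> range (Lf F a)"
  shows "x + y \<in> range (Lf F a)"
proof -
  let ?W = "range (Lf F a)"
  have disj: "?W \<inter> (\<lambda>w. x + w) ` ?W = {}"
  proof (rule ccontr)
    assume "?W \<inter> (\<lambda>w. x + w) ` ?W \<noteq> {}"
    then obtain z where z: "z \<in> ?W \<inter> (\<lambda>w. x + w) ` ?W" by (metis ex_in_conv)
    then obtain w where "w \<in> ?W" "z = x + w" by (metis IntD2 imageE)
    with z have "w \<in> ?W" "x + w \<in> ?W" by (metis IntD1)+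
    then have "w + (x + w) \<in> ?W" by (rule W_add[OF assms(2)])
    moreover have "w + (x + w) = x" by (simp only: add.left_commute[of w x w] vadd_self add_0_right)
    ultimately have "x \<in> ?W" by simp
    then show False using assms(4) by simp
  qed
  have inj: "card ((\<lambda>w. x + w) ` ?W) = card ?W"
    by (rule card_image, rule inj_onI, metis vadd_cancel)
  have c1: "card (?W \<union> (\<lambda>w. x + w) ` ?W) = card ?W + card ((\<lambda>w. x + w) ` ?W)"
    by (rule card_Un_disjoint[OF finite finite disj])
  have "card (?W \<union> (\<lambda>w. x + w) ` ?W) = card (UNIV :: (bit ^ 'n) set)"
    using c1 inj L_card[OF assms(1-3)] by linarith
  then have U: "?W \<union> (\<lambda>w. x + w) ` ?W = UNIV"
    by (rule card_subset_eq[OF finite subset_UNIV])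
  have "y \<in> ?W \<union> (\<lambda>w. x + w) ` ?W" by (simp only: U UNIV_I)
  then have "y \<in> (\<lambda>w. x + w) ` ?W" using assms(5) by (metis UnE)
  then obtain w where "w \<in> ?W" "y = x + w" by (metis imageE)
  then show ?thesis by simp
qed

lemma W_hyper:
  fixes F :: "bit ^ 'n \<Rightarrow> bit ^ 'n"
  assumes apn: "is_APN F" and quad: "is_quadratic F" and a: "a \<noteq> 0"
  shows "\<exists>b. b \<noteq> 0 \<and> range (Lf F a) = H b"
proof -
  let ?W = "range (Lf F a)"
  define \<phi> where "\<phi> z = (if z \<in> ?W then 0 else (1::bit))" for z
  have W0: "0 \<in> ?W" using L_zero[of F a] by (metis rangeI)
  have \<phi>0: "\<phi> 0 = 0" using W0 by (simp add: \<phi>_def)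
  have \<phi>add: "\<phi> (u + v) = \<phi> u + \<phi> v" for u v
  proof (cases "u \<in> ?W"; cases "v \<in> ?W")
    assume "u \<in> ?W" "v \<in> ?W"
    then show ?thesis using W_add[OF quad] by (simp add: \<phi>_def)
  next
    assume u: "u \<in> ?W" and v: "v \<notin> ?W"
    have "u + v \<notin> ?W"
    proof
      assume "u + v \<in> ?W"
      from W_add[OF quad u this] have "v \<in> ?W" by simp
      with v show False by simp
    qed
    then show ?thesis using u v by (simp add: \<phi>_def)
  next
    assume u: "u \<notin> ?W" and v: "v \<in> ?W"
    have "u + v \<notin> ?W"
    proof
      assume "u + v \<in> ?W"
      from W_add[OF quad v this] have "u \<in> ?W" by (simp add: add.left_commute)
      with u show False by simp
    qed
    then show ?thesis using u v by (simp add: \<phi>_def)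
  next
    assume u: "u \<notin> ?W" and v: "v \<notin> ?W"
    then have "u + v \<in> ?W" by (rule W_index2[OF apn quad a])
    then show ?thesis using u v by (simp add: \<phi>_def)
  qed
  have \<phi>smult: "\<phi> (c *s v) = c * \<phi> v" for c v
    by (cases c) (simp_all add: \<phi>0)
  define b where "b = (\<chi> i. \<phi> (axis i 1))"
  have \<phi>dot: "\<phi> z = dotp b z" for z
  proof -
    have "\<phi> z = \<phi> (\<Sum>i\<in>UNIV. z $ i *s axis i 1)" by (simp only: basis_expansion)
    also have "\<dots> = (\<Sum>i\<in>UNIV. \<phi> (z $ i *s axis i 1))"
      using sum_comp_morphism[of \<phi> "\<lambda>i. z $ i *s axis i 1" UNIV, OF \<phi>0 \<phi>add] by (simp add: o_def)
    also have "\<dots> = dotp b z"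
      unfolding dotp_def b_def by (simp add: \<phi>smult mult.commute)
    finally show ?thesis .
  qed
  have WH: "?W = H b"
  proof (rule set_eqI)
    fix z
    show "z \<in> ?W \<longleftrightarrow> z \<in> H b"
      using \<phi>dot[of z] unfolding H_def \<phi>_def by (auto split: if_splits)
  qed
  have "b \<noteq> 0"
  proof
    assume "b = 0"
    then have "H b = UNIV" unfolding H_def dotp_def by simp
    then have "card (UNIV :: (bit ^ 'n) set) = 2 * card (UNIV :: (bit ^ 'n) set)"
      using L_card[OF apn quad a] WH by simp
    then have "card (UNIV :: (bit ^ 'n) set) = 0" by simp
    then show False by simp
  qed
  with WH show ?thesis by blast
qed

lemma Lf_DF: "Lf F a x = DF F a x + DF F a 0"
  unfolding Lf_def DF_def by (simp add: add.assoc)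

lemma DF_Lf: "DF F a x = Lf F a x + DF F a 0"
  unfolding Lf_DF by (simp add: add.assoc)

lemma cover:
  fixes F :: "bit ^ 'n \<Rightarrow> bit ^ 'n"
  assumes apn: "is_APN F" and quad: "is_quadratic F" and a: "a \<noteq> 0"
    and hyp: "\<exists>b. b \<noteq> 0 \<and> range (Lf F a) = H b"
  shows "\<exists>b. b \<noteq> 0 \<and> range (Lf F a) = H b \<and> (range (DF F a) = H b \<or> range (DF F a) = Hbar b)"
proof -
  obtain b where b: "b \<noteq> 0" "range (Lf F a) = H b" using hyp by blast
  define c where "c = DF F a 0"
  have R: "range (DF F a) = {z. dotp b z = dotp b c}"
  proof (rule set_eqI, rule iffI)
    fix z assume "z \<in> range (DF F a)"
    then obtain x where z: "z = DF F a x" by blast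
    have "Lf F a x \<in> H b" using b(2) by (metis rangeI)
    then have "dotp b (Lf F a x) = 0" by (simp add: H_def)
    then show "z \<in> {z. dotp b z = dotp b c}"
      using z DF_Lf[of F a x] by (simp add: dotp_add c_def)
  next
    fix z assume "z \<in> {z. dotp b z = dotp b c}"
    then have "dotp b (z + c) = 0" by (simp add: dotp_add)
    then have "z + c \<in> range (Lf F a)" using b(2) by (simp add: H_def)
    then obtain x where "z + c = Lf F a x" by blast
    then have "z = Lf F a x + c" by (metis add.assoc vadd_self add_0_right)
    then have "z = DF F a x" using DF_Lf[of F a x] by (simp add: c_def)
    then show "z \<in> range (DF F a)" by (simp only: rangeI)
  qed
  show ?thesis
  proof (cases "dotp b c")
    case zero
    then have "range (DF F a) = H b" using R by (simp add: H_def)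
    then show ?thesis using b by blast
  next
    case one
    then have "range (DF F a) = Hbar b" using R by (simp add: Hbar_def)
    then show ?thesis using b by blast
  qed
qed

lemma H_sub:
  fixes b b' :: "bit ^ 'n"
  assumes "b \<noteq> 0" "b' \<noteq> 0" "H b' \<subseteq> H b"
  shows "b' = b"
proof (rule ccontr)
  assume "b' \<noteq> b"
  then obtain i where i: "b' $ i \<noteq> b $ i" by (auto simp: vec_eq_iff)
  show False
  proof (cases "b $ i")
    case one
    then have "b' $ i = 0" using i by simp
    then have "axis i 1 \<in> H b'" by (simp add: H_def dotp_axis)
    moreover have "axis i 1 \<notin> H b" using one by (simp add: H_def dotp_axis)
    ultimately show False using assms(3) by blast
  next
    case zero
    then have bi': "b' $ i = 1" using i by simp
    obtain j where j: "b $ j = 1" using assms(1) by (auto simp: vec_eq_iff)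
    have ij: "i \<noteq> j" using j zero by auto
    show False
    proof (cases "b' $ j")
      case zero
      then have "axis j 1 \<in> H b'" by (simp add: H_def dotp_axis)
      moreover have "axis j 1 \<notin> H b" using j by (simp add: H_def dotp_axis)
      ultimately show False using assms(3) by blast
    next
      case one
      then have "axis i 1 + axis j 1 \<in> H b'" using bi' by (simp add: H_def dotp_axis dotp_add)
      moreover have "axis i 1 + axis j 1 \<notin> H b" using j zero by (simp add: H_def dotp_axis dotp_add)
      ultimately show False using assms(3) by blast
    qed
  qed
qed

lemma charV:
  fixes F :: "bit ^ 'n \<Rightarrow> bit ^ 'n"
  assumes apn: "is_APN F" and quad: "is_quadratic F" and a: "a \<noteq> 0" and b: "b \<noteq> 0"
  shows "a \<in> V F b \<longleftrightarrow> (\<forall>x. dotp b (Lf F a x) = 0)"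
proof
  assume "a \<in> V F b"
  then have "range (DF F a) = H b \<or> range (DF F a) = Hbar b"
    using a unfolding V_def T_def Tbar_def by blast
  then obtain k where k: "\<And>x. dotp b (DF F a x) = k"
    unfolding H_def Hbar_def by (metis (mono_tags, lifting) mem_Collect_eq rangeI)
  show "\<forall>x. dotp b (Lf F a x) = 0"
    using k by (simp add: Lf_DF dotp_add)
next
  assume h: "\<forall>x. dotp b (Lf F a x) = 0"
  obtain b' where b': "b' \<noteq> 0" "range (Lf F a) = H b'"
    "range (DF F a) = H b' \<or> range (DF F a) = Hbar b'"
    using cover[OF apn quad a W_hyper[OF apn quad a]] by blast
  have "H b' \<subseteq> H b"
  proof
    fix z assume "z \<in> H b'"
    then obtain x where "z = Lf F a x" using b'(2) by blast
    then show "z \<in> H b" using h by (simp add: H_def)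
  qed
  then have "b' = b" by (rule H_sub[OF b b'(1)])
  then show "a \<in> V F b" using b'(3) unfolding V_def T_def Tbar_def by blast
qed

theorem mainTheorem1:
  fixes F :: "bit ^ 'n \<Rightarrow> bit ^ 'n"
  assumes "even CARD('n)"
    and "is_APN F"
    and "is_quadratic F"
  shows "(\<forall>b. b \<noteq> 0 \<longrightarrow> f2_subspace (V F b))
       \<and> (\<forall>b1 b2. b1 \<noteq> 0 \<longrightarrow> b2 \<noteq> 0 \<longrightarrow> b1 \<noteq> b2 \<longrightarrow> V F b1 \<inter> V F b2 = {0})
       \<and> (\<forall>x. x \<noteq> 0 \<longrightarrow> (\<exists>b. b \<noteq> 0 \<and> x \<in> V F b))"
proof (intro conjI allI impI)
  note apn = assms(2) and quad = assms(3)
  have V0: "0 \<in> V F b" for b unfolding V_def T_def by blast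
  fix b :: "bit ^ 'n" assume b: "b \<noteq> 0"
  show "f2_subspace (V F b)"
    unfolding f2_subspace_def
  proof (intro conjI ballI)
    show "0 \<in> V F b" by (rule V0)
    fix x y assume x: "x \<in> V F b" and y: "y \<in> V F b"
    show "x + y \<in> V F b"
    proof (cases "x = 0 \<or> y = 0 \<or> x + y = 0")
      case True
      then show ?thesis using x y V0 by auto
    next
      case False
      then have nz: "x \<noteq> 0" "y \<noteq> 0" "x + y \<noteq> 0" by auto
      have hx: "\<forall>z. dotp b (Lf F x z) = 0" using charV[OF apn quad nz(1) b] x by blast
      have hy: "\<forall>z. dotp b (Lf F y z) = 0" using charV[OF apn quad nz(2) b] y by blast
      have "\<forall>z. dotp b (Lf F (x + y) z) = 0"
      proof
        fix z
        have "Lf F (x + y) z = Lf F x z + Lf F y z"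
          by (simp add: L_sym[of F "x + y" z] L_sym[of F x z] L_sym[of F y z] L_add[OF quad])
        then show "dotp b (Lf F (x + y) z) = 0" using hx hy by (simp add: dotp_add)
      qed
      then show ?thesis using charV[OF apn quad nz(3) b] by blast
    qed
  qed
next
  note apn = assms(2) and quad = assms(3)
  fix b1 b2 :: "bit ^ 'n" assume b1: "b1 \<noteq> 0" and b2: "b2 \<noteq> 0" and ne: "b1 \<noteq> b2"
  show "V F b1 \<inter> V F b2 = {0}"
  proof
    show "{0} \<subseteq> V F b1 \<inter> V F b2" unfolding V_def T_def by blast
    show "V F b1 \<inter> V F b2 \<subseteq> {0}"
    proof
      fix a assume a: "a \<in> V F b1 \<inter> V F b2"
      show "a \<in> {0}"
      proof (rule ccontr)
        assume "a \<notin> {0}"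
        then have a0: "a \<noteq> 0" by simp
        have h1: "\<forall>x. dotp b1 (Lf F a x) = 0" using charV[OF apn quad a0 b1] a by blast
        have h2: "\<forall>x. dotp b2 (Lf F a x) = 0" using charV[OF apn quad a0 b2] a by blast
        obtain b' where b': "b' \<noteq> 0" "range (Lf F a) = H b'"
          using W_hyper[OF apn quad a0] by blast
        have "H b' \<subseteq> H b1"
        proof
          fix z assume "z \<in> H b'"
          then obtain x where "z = Lf F a x" using b'(2) by blast
          then show "z \<in> H b1" using h1 by (simp add: H_def)
        qed
        moreover have "H b' \<subseteq> H b2"
        proof
          fix z assume "z \<in> H b'"
          then obtain x where "z = Lf F a x" using b'(2) by blast
          then show "z \<in> H b2" using h2 by (simp add: H_def)
        qed
        ultimately have "b' = b1" "b' = b2" using H_sub b1 b2 b'(1) by blast+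
        then show False using ne by simp
      qed
    qed
  qed
next
  note apn = assms(2) and quad = assms(3)
  fix x :: "bit ^ 'n" assume x: "x \<noteq> 0"
  obtain b where b: "b \<noteq> 0" "range (DF F x) = H b \<or> range (DF F x) = Hbar b"
    using cover[OF apn quad x W_hyper[OF apn quad x]] by blast
  then show "\<exists>b. b \<noteq> 0 \<and> x \<in> V F b" unfolding V_def T_def Tbar_def by blast
qed

end
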